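(* \begin{align*} &\int_{0}^{\frac{\pi}{2}}\frac{\phi(2\cos \phi-1)}{5-4\cos \phi}\,\mathrm{d}\phi=-\frac{1}{12}\pi^{2}+\frac{1}{2}\log^{2}2+\frac{\pi}{2}\arctan{\frac{1}{2}}+\frac{1}{4}\mathrm{Li}_{2}\Big(-\frac{1}{4}\Big)\,,\\ &\int_{0}^{\frac{\pi}{2}}\frac{2\phi\sin \phi}{5-4\cos \phi}\,\mathrm{d}\phi=\frac{\pi}{4}\log\frac{5}{4}+\mathrm{Ti}_{2}\Big(\frac{1}{2}\Big)\,. \end{align*}
   Context: $\mathrm{Li}_2(x)=\sum_{n\ge1}x^n/n^2$ for $|x|\le1$ is the dilogarithm, and $\mathrm{Ti}_{2}(x)=\int_{0}^{x}\frac{\arctan y}{y}\,\mathrm{d}y$ is the inverse tangent integral. *)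

theory Defs
  imports "HOL-Analysis.Analysis"
begin

text \<open>Dilogarithm, defined by its power series (convergent for abs x \<le> 1).\<close>
definition Li2 :: "real \<Rightarrow> real" where
  "Li2 x = (\<Sum>n. x ^ Suc n / (real (Suc n))^2)"

definition Ti2 :: "real \<Rightarrow> real" where
  "Ti2 x = integral {0..x} (\<lambda>y. arctan y / y)"

end

theory Submission imports Defs "HOL-Real_Asymp.Real_Asymp" begin

lemma alg1:
  fixes c s D :: real
  assumes "D = 5 - 4 * c" "D \<noteq> 0" "s * s = 1 - c * c"
  shows "(2 * c - 1) / D * (1 - c / 2) + 2 * s / D * (s / 2) = c / 2"
    and "2 * s / D * (1 - c / 2) - (2 * c - 1) / D * (s / 2) = s / 2"
proof -
  have "(2 * c - 1) / D * (1 - c / 2) + 2 * s / D * (s / 2) = ((2 * c - 1) * (2 - c) + 2 * (s * s)) / (2 * D)"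
    using assms(2) by (simp add: field_simps)
  also have "(2 * c - 1) * (2 - c) + 2 * (s * s) = c * D" unfolding assms(1,3) by (simp add: algebra_simps)
  finally show "(2 * c - 1) / D * (1 - c / 2) + 2 * s / D * (s / 2) = c / 2" using assms(2) by simp
  have "2 * s / D * (1 - c / 2) - (2 * c - 1) / D * (s / 2) = (2 * s * (2 - c) - (2 * c - 1) * s) / (2 * D)"
    using assms(2) by (simp add: field_simps)
  also have "2 * s * (2 - c) - (2 * c - 1) * s = s * D" unfolding assms(1) by (simp add: algebra_simps)
  finally show "2 * s / D * (1 - c / 2) - (2 * c - 1) / D * (s / 2) = s / 2" using assms(2) by simp
qed

lemma fourier:
  fixes t :: real
  shows "(\<lambda>n. (1/2)^Suc n * cos (real (Suc n) * t)) sums ((2 * cos t - 1) / (5 - 4 * cos t))"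
    and "(\<lambda>n. (1/2)^Suc n * sin (real (Suc n) * t)) sums (2 * sin t / (5 - 4 * cos t))"
proof -
  define z where "z = complex_of_real (1/2) * cis t"
  have nz: "norm z < 1" by (simp add: z_def norm_mult)
  have g: "(\<lambda>n. z * z^n) sums (z * (1 / (1 - z)))"
    by (intro sums_mult geometric_sums nz)
  have pw: "z * z^n = complex_of_real ((1/2)^Suc n) * cis (real (Suc n) * t)" for n
  proof -
    have "z * z^n = z ^ Suc n" by simp
    also have "\<dots> = complex_of_real ((1/2)^Suc n) * (cis t) ^ Suc n"
      unfolding z_def power_mult_distrib by simp
    also have "(cis t) ^ Suc n = cis (real (Suc n) * t)" by (rule Complex.DeMoivre)
    finally show ?thesis .
  qed
  have den: "5 - 4 * cos t \<noteq> 0"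
    using cos_le_one[of t] by linarith
  have w: "z * (1 / (1 - z)) = Complex ((2 * cos t - 1) / (5 - 4 * cos t)) (2 * sin t / (5 - 4 * cos t))"
  proof -
    have "1 - z \<noteq> 0" using nz by auto
    moreover have "z = Complex ((2 * cos t - 1) / (5 - 4 * cos t)) (2 * sin t / (5 - 4 * cos t)) * (1 - z)"
    proof -
      have ss: "sin t * sin t = 1 - cos t * cos t" using sin_cos_squared_add[of t] by (simp add: power2_eq_square)
      have e1: "(2 * cos t - 1) / (5 - 4 * cos t) * (1 - cos t / 2) + 2 * sin t / (5 - 4 * cos t) * (sin t / 2) = cos t / 2"
        using den ss by (intro alg1) auto
      have e2: "2 * sin t / (5 - 4 * cos t) * (1 - cos t / 2) - (2 * cos t - 1) / (5 - 4 * cos t) * (sin t / 2) = sin t / 2"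
        using den ss by (intro alg1) auto
      define a where "a = (2 * cos t - 1) / (5 - 4 * cos t)"
      define b where "b = 2 * sin t / (5 - 4 * cos t)"
      have "Re (Complex a b * (1 - z)) = a * (1 - cos t/2) + b * (sin t/2)"
        by (simp add: z_def)
      moreover have "Im (Complex a b * (1 - z)) = b * (1 - cos t/2) - a * (sin t/2)"
        by (simp add: z_def)
      ultimately show ?thesis using e1 e2 unfolding a_def[symmetric] b_def[symmetric]
        by (simp add: complex_eq_iff z_def)
    qed
    ultimately show ?thesis by (simp add: field_simps)
  qed
  from g have "(\<lambda>n. complex_of_real ((1/2)^Suc n) * cis (real (Suc n) * t)) sums
      Complex ((2 * cos t - 1) / (5 - 4 * cos t)) (2 * sin t / (5 - 4 * cos t))"
    by (simp only: pw w)
  then show "(\<lambda>n. (1/2)^Suc n * cos (real (Suc n) * t)) sums ((2 * cos t - 1) / (5 - 4 * cos t))"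
    and "(\<lambda>n. (1/2)^Suc n * sin (real (Suc n) * t)) sums (2 * sin t / (5 - 4 * cos t))"
    by (simp_all add: sums_complex_iff)
qed


lemma integral_series:
  fixes f :: "nat \<Rightarrow> real \<Rightarrow> real" and a b :: real
  assumes cont: "\<And>n. continuous_on {a..b} (f n)"
    and bound: "\<And>n x. x \<in> {a..b} \<Longrightarrow> norm (f n x) \<le> M n"
    and sM: "summable M"
  shows "(\<lambda>n. integral {a..b} (f n)) sums integral {a..b} (\<lambda>x. \<Sum>n. f n x)"
proof -
  have u: "uniform_limit {a..b} (\<lambda>n x. \<Sum>i<n. f i x) (\<lambda>x. \<Sum>i. f i x) sequentially"
    by (rule Weierstrass_m_test[OF bound sM])
  have c: "\<And>n. continuous_on {a..b} (\<lambda>x. \<Sum>i<n. f i x)"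
    by (intro continuous_intros cont)
  obtain I J where I: "\<And>n. ((\<lambda>x. \<Sum>i<n. f i x) has_integral I n) {a..b}"
    and J: "((\<lambda>x. \<Sum>i. f i x) has_integral J) {a..b}" and lim: "I \<longlonglongrightarrow> J"
    using uniform_limit_integral[OF u c] by auto
  have "I n = (\<Sum>i<n. integral {a..b} (f i))" for n
  proof -
    have "I n = integral {a..b} (\<lambda>x. \<Sum>i<n. f i x)" using I[of n] by (simp add: integral_unique)
    also have "\<dots> = (\<Sum>i<n. integral {a..b} (f i))"
      by (rule integral_sum) (auto intro: integrable_continuous_interval cont)
    finally show ?thesis .
  qed
  then have "I = (\<lambda>n. \<Sum>i<n. integral {a..b} (f i))" by (intro ext)
  then show ?thesis using lim J unfolding sums_def by (simp add: integral_unique)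
qed

lemma int_cos_term:
  fixes m :: real
  assumes "m > 0"
  shows "integral {0..pi/2} (\<lambda>x. x * (c * cos (m * x))) =
     c * (pi/2 * sin (m * (pi/2)) / m + cos (m * (pi/2)) / m^2 - 1 / m^2)"
proof -
  let ?G = "\<lambda>x. c * (x * sin (m * x) / m + cos (m * x) / m^2)"
  have "((\<lambda>x. x * (c * cos (m * x))) has_integral (?G (pi/2) - ?G 0)) {0..pi/2}"
  proof (rule fundamental_theorem_of_calculus)
    show "0 \<le> pi/2" by simp
    fix x assume "x \<in> {0..pi/2}"
    show "(?G has_vector_derivative x * (c * cos (m * x))) (at x within {0..pi/2})"
      unfolding has_real_derivative_iff_has_vector_derivative[symmetric]
      using assms
      by (auto intro!: derivative_eq_intros simp: field_simps power2_eq_square)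
  qed
  then show ?thesis using assms by (simp add: integral_unique algebra_simps)
qed

lemma int_sin_term:
  fixes m :: real
  assumes "m > 0"
  shows "integral {0..pi/2} (\<lambda>x. x * (c * sin (m * x))) =
     c * (- (pi/2 * cos (m * (pi/2)) / m) + sin (m * (pi/2)) / m^2)"
proof -
  let ?G = "\<lambda>x. c * (- (x * cos (m * x) / m) + sin (m * x) / m^2)"
  have "((\<lambda>x. x * (c * sin (m * x))) has_integral (?G (pi/2) - ?G 0)) {0..pi/2}"
  proof (rule fundamental_theorem_of_calculus)
    show "0 \<le> pi/2" by simp
    fix x assume "x \<in> {0..pi/2}"
    show "(?G has_vector_derivative x * (c * sin (m * x))) (at x within {0..pi/2})"
      unfolding has_real_derivative_iff_has_vector_derivative[symmetric]
      using assms
      by (auto intro!: derivative_eq_intros simp: field_simps power2_eq_square)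
  qed
  then show ?thesis using assms by (simp add: integral_unique algebra_simps)
qed


lemma trig_vals:
  fixes k :: nat
  shows "sin (real (Suc (2*k)) * (pi/2)) = (-1)^k"
    and "cos (real (Suc (2*k)) * (pi/2)) = 0"
    and "sin (real (Suc (Suc (2*k))) * (pi/2)) = 0"
    and "cos (real (Suc (Suc (2*k))) * (pi/2)) = - ((-1)^k)"
proof -
  have e1: "real (Suc (2*k)) * (pi/2) = real k * pi + pi/2" by (simp add: algebra_simps)
  have e2: "real (Suc (Suc (2*k))) * (pi/2) = real (Suc k) * pi" by (simp add: algebra_simps)
  show "sin (real (Suc (2*k)) * (pi/2)) = (-1)^k" unfolding e1 by (simp add: sin_add cos_npi sin_npi)
  show "cos (real (Suc (2*k)) * (pi/2)) = 0" unfolding e1 by (simp add: cos_add cos_npi sin_npi)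
  show "sin (real (Suc (Suc (2*k))) * (pi/2)) = 0" unfolding e2 by (rule sin_npi)
  show "cos (real (Suc (Suc (2*k))) * (pi/2)) = - ((-1)^k)" unfolding e2 cos_npi by simp
qed

lemma reindex_even:
  fixes f :: "nat \<Rightarrow> real"
  assumes "\<And>k. f (Suc (2*k)) = 0" and "(\<lambda>k. f (2*k)) sums s"
  shows "f sums s"
proof -
  have "strict_mono (\<lambda>k::nat. 2*k)" by (auto simp: strict_mono_def)
  moreover have "f n = 0" if "n \<notin> range (\<lambda>k::nat. 2*k)" for n
  proof -
    from that have "odd n" by auto
    then obtain k where "n = Suc (2*k)" using oddE by fastforce
    then show ?thesis using assms(1) by simp
  qed
  ultimately show ?thesis using sums_mono_reindex[of "\<lambda>k. 2*k" f s] assms(2) by simp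
qed

lemma reindex_odd:
  fixes f :: "nat \<Rightarrow> real"
  assumes "\<And>k. f (2*k) = 0" and "(\<lambda>k. f (Suc (2*k))) sums s"
  shows "f sums s"
proof -
  have "strict_mono (\<lambda>k::nat. Suc (2*k))" by (auto simp: strict_mono_def)
  moreover have "f n = 0" if "n \<notin> range (\<lambda>k::nat. Suc (2*k))" for n
  proof -
    from that have "even n" by (metis oddE rangeI plus_1_eq_Suc add.commute)
    then obtain k where "n = 2*k" by blast
    then show ?thesis using assms(1) by simp
  qed
  ultimately show ?thesis using sums_mono_reindex[of "\<lambda>k. Suc (2*k)" f s] assms(2) by simp
qed

lemma summable_Li2:
  fixes x :: real
  assumes "\<bar>x\<bar> \<le> 1"
  shows "summable (\<lambda>n. x ^ Suc n / (real (Suc n))^2)"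
proof (rule summable_comparison_test)
  show "summable (\<lambda>n. 1 / (real n + 1)^2)" using inverse_squares_sums by (simp add: sums_iff add.commute)
  show "\<exists>N. \<forall>n\<ge>N. norm (x ^ Suc n / (real (Suc n))^2) \<le> 1 / (real n + 1)^2"
  proof (intro exI allI impI)
    fix n :: nat
    have "\<bar>x\<bar> ^ Suc n \<le> 1" using assms by (intro power_le_one) auto
    then have "\<bar>x\<bar> ^ Suc n / (real n + 1)^2 \<le> 1 / (real n + 1)^2"
      by (intro divide_right_mono) auto
    moreover have "norm (x ^ Suc n / (real (Suc n))^2) = \<bar>x\<bar> ^ Suc n / (real n + 1)^2"
      by (simp add: power_abs abs_mult add.commute)
    ultimately show "norm (x ^ Suc n / (real (Suc n))^2) \<le> 1 / (real n + 1)^2" by simp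
  qed
qed

lemma Li2_sums: "\<bar>x\<bar> \<le> 1 \<Longrightarrow> (\<lambda>n. x ^ Suc n / (real (Suc n))^2) sums Li2 x"
  unfolding Li2_def by (rule summable_sums[OF summable_Li2])

lemma sum_A: "(\<lambda>n. (1/2)^Suc n * sin (real (Suc n) * (pi/2)) / real (Suc n)) sums arctan (1/2)"
proof (rule reindex_even)
  show "(1/2)^Suc (Suc (2*k)) * sin (real (Suc (Suc (2*k))) * (pi/2)) / real (Suc (Suc (2*k))) = 0" for k
    unfolding trig_vals by simp
  have "(\<lambda>k. (-1)^k * (1 / real (k*2+1) * (1/2::real) ^ (k*2+1))) sums arctan (1/2)"
    using summable_arctan_series[of "1/2"] arctan_series[of "1/2"] by (simp add: sums_iff)
  moreover have "(-1)^k * (1 / real (k*2+1) * (1/2::real) ^ (k*2+1)) =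
      (1/2)^Suc (2*k) * sin (real (Suc (2*k)) * (pi/2)) / real (Suc (2*k))" for k
    by (simp only: trig_vals) (simp add: mult.commute)
  ultimately show "(\<lambda>k. (1/2)^Suc (2*k) * sin (real (Suc (2*k)) * (pi/2)) / real (Suc (2*k))) sums arctan (1/2)"
    by simp
qed

lemma sum_D: "(\<lambda>n. (1/2)^Suc n * cos (real (Suc n) * (pi/2)) / real (Suc n)) sums (- (ln (5/4) / 2))"
proof (rule reindex_odd)
  show "(1/2)^Suc (2*k) * cos (real (Suc (2*k)) * (pi/2)) / real (Suc (2*k)) = 0" for k
    unfolding trig_vals by simp
  have "(\<lambda>n. - ((-(1/4::real))^n) / of_nat n) sums ln (1 + 1/4)"
    by (rule ln_series') simp
  then have "(\<lambda>n. - ((-(1/4::real))^Suc n) / of_nat (Suc n)) sums ln (5/4)"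
    by (subst sums_Suc_iff) simp
  from sums_mult[OF this, of "- (1/2)"]
  have "(\<lambda>n. - (1/2) * (- ((-(1/4::real))^Suc n) / of_nat (Suc n))) sums (- (ln (5/4) / 2))" by simp
  moreover have "- (1/2) * (- ((-(1/4::real))^Suc k) / of_nat (Suc k)) =
      (1/2)^Suc (Suc (2*k)) * cos (real (Suc (Suc (2*k))) * (pi/2)) / real (Suc (Suc (2*k)))" for k
  proof -
    have "(-(1/4::real))^Suc k = - ((-1)^k * (1/2)^(2 * Suc k))"
      by (simp add: power_mult power_minus' power_mult_distrib power2_eq_square)
    then show ?thesis by (simp only: trig_vals) (simp add: field_simps)
  qed
  ultimately show "(\<lambda>k. (1/2)^Suc (Suc (2*k)) * cos (real (Suc (Suc (2*k))) * (pi/2)) / real (Suc (Suc (2*k)))) sums (- (ln (5/4) / 2))"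
    by simp
qed

lemma sum_B: "(\<lambda>n. (1/2)^Suc n * cos (real (Suc n) * (pi/2)) / (real (Suc n))^2) sums (Li2 (-1/4) / 4)"
proof (rule reindex_odd)
  show "(1/2)^Suc (2*k) * cos (real (Suc (2*k)) * (pi/2)) / (real (Suc (2*k)))^2 = 0" for k
    unfolding trig_vals by simp
  have "(\<lambda>n. (-1/4::real) ^ Suc n / (real (Suc n))^2) sums Li2 (-1/4)"
    by (rule Li2_sums) simp
  from sums_divide[OF this, of 4]
  have "(\<lambda>n. (-1/4::real) ^ Suc n / (real (Suc n))^2 / 4) sums (Li2 (-1/4) / 4)" .
  moreover have "(-1/4::real) ^ Suc k / (real (Suc k))^2 / 4 =
      (1/2)^Suc (Suc (2*k)) * cos (real (Suc (Suc (2*k))) * (pi/2)) / (real (Suc (Suc (2*k))))^2" for k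
  proof -
    have "(-1/4::real)^Suc k = - ((-1)^k * (1/2)^(2 * Suc k))"
      by (simp add: power_mult power_minus' power_mult_distrib power2_eq_square)
    then show ?thesis by (simp only: trig_vals) (simp add: field_simps power2_eq_square)
  qed
  ultimately show "(\<lambda>k. (1/2)^Suc (Suc (2*k)) * cos (real (Suc (Suc (2*k))) * (pi/2)) / (real (Suc (Suc (2*k))))^2) sums (Li2 (-1/4) / 4)"
    by simp
qed


lemma Ti2_series:
  "(\<lambda>k. (-1)^k * (1/2::real)^(2*k+1) / (real (2*k+1))^2) sums Ti2 (1/2)"
proof -
  define T where "T k x = (-1)^k * x^(2*k+1) / (real (2*k+1))^2" for k and x :: real
  define T' where "T' k x = (-1)^k * x^(2*k) / real (2*k+1)" for k and x :: real
  define S where "S = {0..1/2::real}"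
  have der: "(T k has_field_derivative T' k x) (at x within S)" for k x
  proof -
    have "((\<lambda>x. ((-1)^k / (real (2*k+1))^2) * x^(2*k+1)) has_field_derivative
       ((-1)^k / (real (2*k+1))^2) * (real (2*k+1) * x^(2*k+1-Suc 0))) (at x within S)"
      by (intro DERIV_cmult DERIV_pow)
    moreover have "(\<lambda>x. ((-1)^k / (real (2*k+1))^2) * x^(2*k+1)) = T k"
      by (simp add: T_def fun_eq_iff)
    moreover have "((-1)^k / (real (2*k+1))^2) * (real (2*k+1) * x^(2*k+1-Suc 0)) = T' k x"
      unfolding T'_def power2_eq_square by (simp add: field_simps del: of_nat_Suc)
    ultimately show ?thesis by simp
  qed
  have bnd: "norm (T' k x) \<le> (1/4)^k" if "x \<in> S" for k x
  proof -
    from that have x: "0 \<le> x" "x \<le> 1/2" by (auto simp: S_def)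
    have "x^2 \<le> (1/2)^2" using x by (intro power_mono) auto
    then have "x^2 \<le> 1/4" by (simp add: power2_eq_square)
    then have "(x^2)^k \<le> (1/4)^k" by (intro power_mono) auto
    moreover have "norm (T' k x) = (x^2)^k / real (2*k+1)"
      using x by (simp add: T'_def abs_mult power_abs power_mult)
    moreover have "(x^2)^k / real (2*k+1) \<le> (x^2)^k"
      using divide_left_mono[of 1 "real (2*k+1)" "(x^2)^k"] by simp
    ultimately show ?thesis by linarith
  qed
  have u: "uniform_limit S (\<lambda>n x. \<Sum>i<n. T' i x) (\<lambda>x. \<Sum>i. T' i x) sequentially"
  proof (rule Weierstrass_m_test)
    show "summable (\<lambda>k. (1/4::real)^k)" by (rule summable_geometric) simp
  qed (rule bnd)
  have "convex S" by (simp add: S_def)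
  moreover have "summable (\<lambda>n. T n 0)" by (simp add: T_def)
  moreover have "(0::real) \<in> S" by (simp add: S_def)
  ultimately have "\<exists>g. \<forall>x\<in>S. (\<lambda>n. T n x) sums g x \<and> (g has_field_derivative (\<Sum>i. T' i x)) (at x within S)"
    using has_field_derivative_series[OF _ der u] by blast
  then obtain g where
    g: "\<And>x. x \<in> S \<Longrightarrow> (\<lambda>n. T n x) sums g x \<and> (g has_field_derivative (\<Sum>i. T' i x)) (at x within S)"
    by blast
  have "((\<lambda>x. \<Sum>i. T' i x) has_integral (g (1/2) - g 0)) {0..1/2}"
  proof (rule fundamental_theorem_of_calculus)
    fix x assume "x \<in> {0..1/2::real}"
    then show "(g has_vector_derivative (\<Sum>i. T' i x)) (at x within {0..1/2})"
      using g[of x] unfolding S_def has_real_derivative_iff_has_vector_derivative[symmetric] by auto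
  qed simp
  moreover have "g 0 = 0"
  proof -
    have "(\<lambda>n. T n 0) sums g 0" using g[of 0] by (auto simp: S_def)
    moreover have "(\<lambda>n. T n 0) sums 0" by (simp add: T_def)
    ultimately show ?thesis using sums_unique2 by blast
  qed
  ultimately have hi: "((\<lambda>x. \<Sum>i. T' i x) has_integral g (1/2)) {0..1/2}" by simp
  have "((\<lambda>y. arctan y / y) has_integral g (1/2)) {0..1/2}"
  proof (rule has_integral_spike_finite[where S="{0}", OF _ _ hi])
    fix y assume "y \<in> {0..1/2::real} - {0}"
    then have y: "y \<noteq> 0" "\<bar>y\<bar> \<le> 1" by auto
    have "(\<lambda>k. (-1)^k * (1 / real (k*2+1) * y ^ (k*2+1))) sums arctan y"
      using summable_arctan_series[OF y(2)] arctan_series[OF y(2)] by (simp add: sums_iff)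
    from sums_divide[OF this, of y]
    have "(\<lambda>k. (-1)^k * (1 / real (k*2+1) * y ^ (k*2+1)) / y) sums (arctan y / y)" .
    moreover have "(-1)^k * (1 / real (k*2+1) * y ^ (k*2+1)) / y = T' k y" for k
      using y(1) by (simp add: T'_def mult.commute)
    ultimately show "arctan y / y = (\<Sum>i. T' i y)" by (simp add: sums_iff)
  qed simp
  then have "Ti2 (1/2) = g (1/2)" unfolding Ti2_def by (rule integral_unique)
  moreover have "(\<lambda>n. T n (1/2)) sums g (1/2)" using g[of "1/2"] by (auto simp: S_def)
  ultimately show ?thesis by (simp add: T_def)
qed


lemma Li2_cont: "continuous_on {-1..1} Li2"
proof -
  have bnd: "norm (x ^ Suc n / (real (Suc n))^2) \<le> 1 / (real n + 1)^2" if "x \<in> {-1..1}" for n and x :: real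
  proof -
    have "\<bar>x\<bar> ^ Suc n \<le> 1" using that by (intro power_le_one) auto
    then have "\<bar>x\<bar> ^ Suc n / (real n + 1)^2 \<le> 1 / (real n + 1)^2"
      by (intro divide_right_mono) auto
    moreover have "norm (x ^ Suc n / (real (Suc n))^2) = \<bar>x\<bar> ^ Suc n / (real n + 1)^2"
      by (simp add: power_abs abs_mult add.commute)
    ultimately show ?thesis by simp
  qed
  have "summable (\<lambda>n. 1 / (real n + 1)^2)" using inverse_squares_sums by (simp add: sums_iff add.commute)
  then have u0: "uniform_limit {-1..1} (\<lambda>n x. \<Sum>i<n. x ^ Suc i / (real (Suc i))^2)
      (\<lambda>x. \<Sum>i. x ^ Suc i / (real (Suc i))^2) sequentially"
    by (intro Weierstrass_m_test[where M="\<lambda>n. 1 / (real n + 1)^2"] bnd)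
  have "Li2 = (\<lambda>x. \<Sum>i. x ^ Suc i / (real (Suc i))^2)" by (simp add: Li2_def fun_eq_iff)
  with u0 have u: "uniform_limit {-1..1} (\<lambda>n x. \<Sum>i<n. x ^ Suc i / (real (Suc i))^2) Li2 sequentially"
    by simp
  show ?thesis
    by (rule uniform_limit_theorem[OF _ u]) (auto intro!: always_eventually continuous_intros)
qed

lemma Li2_one: "Li2 1 = pi^2 / 6"
  using inverse_squares_sums unfolding Li2_def by (simp add: sums_iff add.commute)

lemma Li2_zero: "Li2 0 = 0"
  unfolding Li2_def by simp

lemma Li2_deriv:
  fixes x :: real
  assumes "0 < x" "x < 1"
  shows "(Li2 has_real_derivative (- ln (1 - x) / x)) (at x)"
proof -
  define f where "f n = 1 / (real (Suc n))^2" for n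
  have L: "Li2 = (\<lambda>x. \<Sum>n. f n * x^(Suc n))"
    by (simp add: Li2_def f_def fun_eq_iff)
  have fe: "f n * real (Suc n) * y^n = y^n / real (Suc n)" for n and y :: real
    by (simp add: f_def power2_eq_square)
  have conv: "summable (\<lambda>n. f n * real (Suc n) * y^n)" if "y \<in> {-1<..<1}" for y :: real
  proof (rule summable_comparison_test)
    show "summable (\<lambda>n. \<bar>y\<bar>^n)" using that by (intro summable_geometric) auto
    show "\<exists>N. \<forall>n\<ge>N. norm (f n * real (Suc n) * y^n) \<le> \<bar>y\<bar>^n"
    proof (intro exI allI impI)
      fix n :: nat
      have "\<bar>y\<bar>^n / real (Suc n) \<le> \<bar>y\<bar>^n / 1"
        by (intro divide_left_mono) auto
      then show "norm (f n * real (Suc n) * y^n) \<le> \<bar>y\<bar>^n"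
        unfolding fe by (simp add: power_abs)
    qed
  qed
  have "DERIV (\<lambda>x. (\<Sum>n. f n * x^(Suc n))) x :> (\<Sum>n. f n * real (Suc n) * x^n)"
    by (rule DERIV_power_series'[of 1 f x]) (use assms conv in auto)
  moreover have "(\<Sum>n. f n * real (Suc n) * x^n) = - ln (1 - x) / x"
  proof -
    have "(\<lambda>n. - ((-(-x))^n) / of_nat n) sums ln (1 + (-x))"
      by (rule ln_series') (use assms in auto)
    then have "(\<lambda>n. - (x^n) / of_nat n) sums ln (1 - x)" by simp
    then have "(\<lambda>n. - (x^Suc n) / of_nat (Suc n)) sums ln (1 - x)"
      by (subst sums_Suc_iff) simp
    from sums_divide[OF this, of "-x"]
    have "(\<lambda>n. - (x^Suc n) / of_nat (Suc n) / (-x)) sums (ln (1 - x) / (-x))" .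
    moreover have "- (x^Suc n) / of_nat (Suc n) / (-x) = f n * real (Suc n) * x^n" for n
    proof -
      have "- (x^Suc n) / of_nat (Suc n) / (-x) = (x * x^n) / (x * real (Suc n))"
        by (simp add: mult.commute)
      also have "\<dots> = x^n / real (Suc n)"
        using assms by (intro mult_divide_mult_cancel_left) auto
      finally show ?thesis unfolding fe .
    qed
    ultimately show ?thesis by (simp add: sums_iff)
  qed
  ultimately show ?thesis unfolding L by simp
qed

lemma Li2_half: "Li2 (1/2) = pi^2 / 12 - (ln 2)^2 / 2"
proof -
  define F where "F x = Li2 x + Li2 (1 - x) + ln x * ln (1 - x)" for x :: real
  have dF: "(F has_real_derivative 0) (at x)" if "0 < x" "x < 1" for x :: real
  proof -
    have d1: "(Li2 has_real_derivative (- ln (1 - x) / x)) (at x)" by (rule Li2_deriv) (use that in auto)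
    have d2': "(Li2 has_real_derivative (- ln (1 - (1 - x)) / (1 - x))) (at (1 - x))"
      by (rule Li2_deriv) (use that in auto)
    have d2: "((\<lambda>x. Li2 (1 - x)) has_real_derivative (- ln (1 - (1 - x)) / (1 - x)) * (-1)) (at x)"
      by (rule DERIV_chain2[where f=Li2 and g="\<lambda>x. 1 - x", OF d2']) (auto intro!: derivative_eq_intros)
    have d3: "((\<lambda>x. ln x * ln (1 - x)) has_real_derivative (1 / x * ln (1 - x) + ln x * (- 1 / (1 - x)))) (at x)"
      using that by (auto intro!: derivative_eq_intros simp: field_simps)
    have "(F has_real_derivative (- ln (1 - x) / x) + (- ln (1 - (1 - x)) / (1 - x)) * (-1)
         + (1 / x * ln (1 - x) + ln x * (- 1 / (1 - x)))) (at x)"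
      unfolding F_def[abs_def] by (intro DERIV_add d1 d2 d3)
    moreover have "(- ln (1 - x) / x) + (- ln (1 - (1 - x)) / (1 - x)) * (-1)
         + (1 / x * ln (1 - x) + ln x * (- 1 / (1 - x))) = 0"
      by simp
    ultimately show ?thesis by simp
  qed
  have const: "F y = F (1/2)" if "0 < y" "y < 1/2" for y :: real
  proof -
    have "continuous_on {y..1/2} F"
      using that by (intro continuous_at_imp_continuous_on ballI DERIV_isCont[OF dF]) auto
    from DERIV_isconst2[OF that(2) this, of "1/2"] that show ?thesis
      using dF by auto
  qed
  have ev: "eventually (\<lambda>y. y \<in> {-1..1::real}) (at_right 0)"
    by (rule eventually_at_rightI[of 0 1]) auto
  have t1: "((\<lambda>y. Li2 y) \<longlongrightarrow> Li2 0) (at_right 0)"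
    using continuous_on_tendsto_compose[OF Li2_cont, of "\<lambda>y. y" 0 "at_right 0"] ev by simp
  have ev2: "eventually (\<lambda>y. 1 - y \<in> {-1..1::real}) (at_right 0)"
    by (rule eventually_at_rightI[of 0 1]) auto
  have t2: "((\<lambda>y. Li2 (1 - y)) \<longlongrightarrow> Li2 1) (at_right 0)"
  proof -
    have "((\<lambda>y. 1 - y) \<longlongrightarrow> (1::real)) (at_right 0)" by (auto intro!: tendsto_eq_intros)
    from continuous_on_tendsto_compose[OF Li2_cont this _ ev2] show ?thesis by simp
  qed
  have t3: "((\<lambda>y::real. ln y * ln (1 - y)) \<longlongrightarrow> 0) (at_right 0)"
    by real_asymp
  have "(F \<longlongrightarrow> 0 + pi^2/6 + 0) (at_right 0)"
    unfolding F_def[abs_def] using tendsto_add[OF tendsto_add[OF t1 t2] t3] by (simp add: Li2_zero Li2_one)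
  moreover have "(F \<longlongrightarrow> F (1/2)) (at_right 0)"
  proof (rule tendsto_eventually)
    show "eventually (\<lambda>y. F y = F (1/2)) (at_right 0)"
      by (rule eventually_at_rightI[of 0 "1/2"]) (auto intro: const)
  qed
  ultimately have "F (1/2) = pi^2/6"
    using tendsto_unique[OF trivial_limit_at_right_real] by fastforce
  moreover have "F (1/2) = 2 * Li2 (1/2) + (ln 2)^2"
    by (simp add: F_def ln_div power2_eq_square)
  ultimately show ?thesis by simp
qed

lemma sum_L: "(\<lambda>n. (1/2::real)^Suc n / (real (Suc n))^2) sums (pi^2 / 12 - (ln 2)^2 / 2)"
  using Li2_sums[of "1/2"] Li2_half by simp

lemma sum_E: "(\<lambda>n. (1/2)^Suc n * sin (real (Suc n) * (pi/2)) / (real (Suc n))^2) sums Ti2 (1/2)"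
proof (rule reindex_even)
  show "(1/2)^Suc (Suc (2*k)) * sin (real (Suc (Suc (2*k))) * (pi/2)) / (real (Suc (Suc (2*k))))^2 = 0" for k
    unfolding trig_vals by simp
  have eq: "(\<lambda>k. (1/2)^Suc (2*k) * sin (real (Suc (2*k)) * (pi/2)) / (real (Suc (2*k)))^2) =
      (\<lambda>k. (-1)^k * (1/2::real)^(2*k+1) / (real (2*k+1))^2)"
    by (rule ext) (simp only: trig_vals, simp add: mult.commute)
  show "(\<lambda>k. (1/2)^Suc (2*k) * sin (real (Suc (2*k)) * (pi/2)) / (real (Suc (2*k)))^2) sums Ti2 (1/2)"
    unfolding eq by (rule Ti2_series)
qed

lemma part1:
  "integral {0..pi/2} (\<lambda>\<phi>. \<phi> * (2 * cos \<phi> - 1) / (5 - 4 * cos \<phi>))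
     = - (pi^2 / 12) + (ln 2)^2 / 2 + pi / 2 * arctan (1/2) + Li2 (-1/4) / 4"
proof -
  define f where "f n x = x * ((1/2::real)^Suc n * cos (real (Suc n) * x))" for n x
  have pt: "(\<lambda>n. f n x) sums (x * (2 * cos x - 1) / (5 - 4 * cos x))" for x
    unfolding f_def using sums_mult[OF fourier(1)[of x], of x] by simp
  have "integral {0..pi/2} (\<lambda>\<phi>. \<phi> * (2 * cos \<phi> - 1) / (5 - 4 * cos \<phi>)) = integral {0..pi/2} (\<lambda>x. \<Sum>n. f n x)"
    using pt by (intro integral_cong) (simp add: sums_iff)
  moreover have "(\<lambda>n. integral {0..pi/2} (f n)) sums integral {0..pi/2} (\<lambda>x. \<Sum>n. f n x)"
  proof (rule integral_series[where M="\<lambda>n. pi/2 * (1/2)^Suc n"])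
    show "continuous_on {0..pi/2} (f n)" for n unfolding f_def by (intro continuous_intros)
    show "summable (\<lambda>n. pi/2 * (1/2::real)^Suc n)"
      by (intro summable_mult summable_Suc_iff[THEN iffD2] summable_geometric) simp
    fix n x assume x: "x \<in> {0..pi/2::real}"
    have "\<bar>cos (real (Suc n) * x)\<bar> \<le> 1" by simp
    then have "x * ((1/2)^Suc n * \<bar>cos (real (Suc n) * x)\<bar>) \<le> pi/2 * ((1/2)^Suc n * 1)"
      using x by (intro mult_mono) auto
    then show "norm (f n x) \<le> pi/2 * (1/2)^Suc n"
      using x by (simp add: f_def abs_mult)
  qed
  moreover have "integral {0..pi/2} (f n) =
      pi/2 * ((1/2)^Suc n * sin (real (Suc n) * (pi/2)) / real (Suc n))
      + (1/2)^Suc n * cos (real (Suc n) * (pi/2)) / (real (Suc n))^2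
      - (1/2::real)^Suc n / (real (Suc n))^2" for n
  proof -
    have "integral {0..pi/2} (f n) = (1/2)^Suc n * (pi/2 * sin (real (Suc n) * (pi/2)) / real (Suc n)
        + cos (real (Suc n) * (pi/2)) / (real (Suc n))^2 - 1 / (real (Suc n))^2)"
      unfolding f_def[abs_def] by (rule int_cos_term) simp
    then show ?thesis by (simp add: algebra_simps)
  qed
  moreover have "(\<lambda>n. pi/2 * ((1/2)^Suc n * sin (real (Suc n) * (pi/2)) / real (Suc n))
      + (1/2)^Suc n * cos (real (Suc n) * (pi/2)) / (real (Suc n))^2
      - (1/2::real)^Suc n / (real (Suc n))^2) sums
      (pi/2 * arctan (1/2) + Li2 (-1/4) / 4 - (pi^2 / 12 - (ln 2)^2 / 2))"
    by (intro sums_diff sums_add sums_mult sum_A sum_B sum_L)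
  ultimately show ?thesis
    by (simp add: sums_iff)
qed

lemma part2:
  "integral {0..pi/2} (\<lambda>\<phi>. 2 * \<phi> * sin \<phi> / (5 - 4 * cos \<phi>)) = pi / 4 * ln (5/4) + Ti2 (1/2)"
proof -
  define f where "f n x = x * ((1/2::real)^Suc n * sin (real (Suc n) * x))" for n x
  have pt: "(\<lambda>n. f n x) sums (2 * x * sin x / (5 - 4 * cos x))" for x
  proof -
    have h: "(\<lambda>n. f n x) sums (x * (2 * sin x / (5 - 4 * cos x)))"
      unfolding f_def by (rule sums_mult[OF fourier(2)])
    have e: "2 * x * sin x / (5 - 4 * cos x) = x * (2 * sin x / (5 - 4 * cos x))" by simp
    show ?thesis unfolding e by (rule h)
  qed
  have "integral {0..pi/2} (\<lambda>\<phi>. 2 * \<phi> * sin \<phi> / (5 - 4 * cos \<phi>)) = integral {0..pi/2} (\<lambda>x. \<Sum>n. f n x)"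
    using pt by (intro integral_cong) (simp add: sums_iff)
  moreover have "(\<lambda>n. integral {0..pi/2} (f n)) sums integral {0..pi/2} (\<lambda>x. \<Sum>n. f n x)"
  proof (rule integral_series[where M="\<lambda>n. pi/2 * (1/2)^Suc n"])
    show "continuous_on {0..pi/2} (f n)" for n unfolding f_def by (intro continuous_intros)
    show "summable (\<lambda>n. pi/2 * (1/2::real)^Suc n)"
      by (intro summable_mult summable_Suc_iff[THEN iffD2] summable_geometric) simp
    fix n x assume x: "x \<in> {0..pi/2::real}"
    have "\<bar>sin (real (Suc n) * x)\<bar> \<le> 1" by simp
    then have "x * ((1/2)^Suc n * \<bar>sin (real (Suc n) * x)\<bar>) \<le> pi/2 * ((1/2)^Suc n * 1)"
      using x by (intro mult_mono) auto
    then show "norm (f n x) \<le> pi/2 * (1/2)^Suc n"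
      using x by (simp add: f_def abs_mult)
  qed
  moreover have "integral {0..pi/2} (f n) =
      - (pi/2) * ((1/2)^Suc n * cos (real (Suc n) * (pi/2)) / real (Suc n))
      + (1/2::real)^Suc n * sin (real (Suc n) * (pi/2)) / (real (Suc n))^2" for n
  proof -
    have "integral {0..pi/2} (f n) = (1/2)^Suc n * (- (pi/2 * cos (real (Suc n) * (pi/2)) / real (Suc n))
        + sin (real (Suc n) * (pi/2)) / (real (Suc n))^2)"
      unfolding f_def[abs_def] by (rule int_sin_term) simp
    then show ?thesis by (simp add: algebra_simps)
  qed
  moreover have "(\<lambda>n. - (pi/2) * ((1/2)^Suc n * cos (real (Suc n) * (pi/2)) / real (Suc n))
      + (1/2::real)^Suc n * sin (real (Suc n) * (pi/2)) / (real (Suc n))^2) sums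
      (- (pi/2) * (- (ln (5/4) / 2)) + Ti2 (1/2))"
    by (intro sums_add sums_mult sum_D sum_E)
  ultimately show ?thesis
    by (simp add: sums_iff)
qed

theorem proposition1:
  shows "(integral {0..pi/2} (\<lambda>\<phi>. \<phi> * (2 * cos \<phi> - 1) / (5 - 4 * cos \<phi>))
           = - (pi^2 / 12) + (ln 2)^2 / 2 + pi / 2 * arctan (1/2) + Li2 (-1/4) / 4)
         \<and> (integral {0..pi/2} (\<lambda>\<phi>. 2 * \<phi> * sin \<phi> / (5 - 4 * cos \<phi>))
           = pi / 4 * ln (5/4) + Ti2 (1/2))"
  using part1 part2 by blast

end
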